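(* Let $U\subseteq\mathbb{R}^d$ be open and convex, let $h:U\to\mathbb{R}$ be convex and twice continuously differentiable, let $f:U\to\mathbb{R}$ be continuously differentiable, let $\mu>0$, and let $\alpha,\beta,\gamma:\mathbb{R}\to\mathbb{R}$ be smooth functions. Define the (second Bregman) Lagrangian $$\mathcal{L}(x,v,t)=e^{\alpha_t+\gamma_t+\beta_t}\Big(\mu\, D_h\big(x+e^{-\alpha_t}v,\;x\big)-f(x)\Big),$$ for $(x,v,t)$ with $x,\,x+e^{-\alpha_t}v\in U$. Assume $\dot\gamma_t=e^{\alpha_t}$ for all $t$. Then a twice differentiable curve $t\mapsto X_t$ satisfies the Euler–Lagrange equation $$\frac{\partial\mathcal{L}}{\partial x}(X_t,\dot X_t,t)=\frac{d}{dt}\frac{\partial\mathcal{L}}{\partial v}(X_t,\dot X_t,t)$$ if and only if $$\frac{d}{dt}\nabla h\big(X_t+e^{-\alpha_t}\dot X_t\big)=\dot\beta_t\,\nabla h(X_t)-\dot\beta_t\,\nabla h\big(X_t+e^{-\alpha_t}\dot X_t\big)-\frac{e^{\alpha_t}}{\mu}\nabla f(X_t).$$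
   Context: The Bregman divergence of $h$ is $D_h(y,x)=h(y)-h(x)-\langle\nabla h(x),y-x\rangle$. Dots denote time derivatives. *)

theory Defs
  imports "HOL-Analysis.Analysis"
begin

definition grad :: "('a::euclidean_space \<Rightarrow> real) \<Rightarrow> 'a \<Rightarrow> 'a" where
  "grad f x = (SOME g. (f has_derivative (\<lambda>y. g \<bullet> y)) (at x))"

definition bregman :: "('a::euclidean_space \<Rightarrow> real) \<Rightarrow> 'a \<Rightarrow> 'a \<Rightarrow> real" where
  "bregman h y x = h y - h x - grad h x \<bullet> (y - x)"

definition C1_on :: "'a::euclidean_space set \<Rightarrow> ('a \<Rightarrow> real) \<Rightarrow> bool" where
  "C1_on U f \<longleftrightarrow> (\<exists>g. (\<forall>x\<in>U. (f has_derivative (\<lambda>y. g x \<bullet> y)) (at x)) \<and> continuous_on U g)"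

definition C2_on :: "'a::euclidean_space set \<Rightarrow> ('a \<Rightarrow> real) \<Rightarrow> bool" where
  "C2_on U f \<longleftrightarrow> (\<exists>g H. (\<forall>x\<in>U. (f has_derivative (\<lambda>y. g x \<bullet> y)) (at x))
      \<and> (\<forall>x\<in>U. (g has_derivative blinfun_apply (H x)) (at x)) \<and> continuous_on U H)"

definition smooth_real :: "(real \<Rightarrow> real) \<Rightarrow> bool" where
  "smooth_real f \<longleftrightarrow> (\<forall>n t. ((deriv ^^ n) f) differentiable (at t))"

definition bregman_lagrangian ::
  "('a::euclidean_space \<Rightarrow> real) \<Rightarrow> ('a \<Rightarrow> real) \<Rightarrow> real \<Rightarrow>
   (real \<Rightarrow> real) \<Rightarrow> (real \<Rightarrow> real) \<Rightarrow> (real \<Rightarrow> real) \<Rightarrow> 'a \<Rightarrow> 'a \<Rightarrow> real \<Rightarrow> real" where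
  "bregman_lagrangian h f \<mu> \<alpha> \<beta> \<gamma> x v t =
     exp (\<alpha> t + \<gamma> t + \<beta> t) * (\<mu> * bregman h (x + exp (- \<alpha> t) *\<^sub>R v) x - f x)"

end

theory Submission
  imports Defs
begin

lemma mixed_step:
  fixes h :: "'a::euclidean_space \<Rightarrow> real"
  assumes hd: "\<And>z. z\<in>U \<Longrightarrow> (h has_derivative (\<lambda>y. g z \<bullet> y)) (at z)"
    and gd: "\<And>z. z\<in>U \<Longrightarrow> (g has_derivative blinfun_apply (H z)) (at z)"
    and r: "r > 0" and sub: "cball x (r*(norm u + norm w)) \<subseteq> U"
  shows "\<exists>p. dist p x \<le> r*(norm u + norm w) \<and>
     h(x + r*\<^sub>R u + r*\<^sub>R w) - h(x + r*\<^sub>R u) - h(x + r*\<^sub>R w) + h x = r^2 * (H p w \<bullet> u)"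
proof -
  have nb: "norm (t*\<^sub>R u + \<tau>*\<^sub>R w) \<le> r*(norm u + norm w)" if "0\<le>t" "t\<le>r" "0\<le>\<tau>" "\<tau>\<le>r" for t \<tau>
  proof -
    have "norm (t*\<^sub>R u + \<tau>*\<^sub>R w) \<le> t*norm u + \<tau> * norm w"
      using that norm_triangle_le[of "t*\<^sub>R u" "\<tau>*\<^sub>R w"] by simp
    also have "\<dots> \<le> r*norm u + r*norm w"
      using that by (intro add_mono mult_right_mono) auto
    finally show ?thesis by (simp add: algebra_simps)
  qed
  have inU: "x + t *\<^sub>R u + \<tau> *\<^sub>R w \<in> U" if "0\<le>t" "t\<le>r" "0\<le>\<tau>" "\<tau>\<le>r" for t \<tau>
  proof -
    have "dist x (x + t *\<^sub>R u + \<tau> *\<^sub>R w) \<le> r*(norm u + norm w)"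
      using nb[OF that] by (simp add: dist_norm norm_minus_commute add.commute)
    then show ?thesis using sub by auto
  qed
  have inU0: "x + t *\<^sub>R u \<in> U" if "0\<le>t" "t\<le>r" for t
    using inU[OF that, of 0] r by simp
  define \<psi> where "\<psi> t = h (x + t*\<^sub>R u + r*\<^sub>R w) - h (x + t*\<^sub>R u)" for t
  have dpsi: "(\<psi> has_derivative (\<lambda>s. g (x + t*\<^sub>R u + r*\<^sub>R w) \<bullet> (s*\<^sub>R u) - g (x + t*\<^sub>R u) \<bullet> (s*\<^sub>R u))) (at t within {0..r})"
    if "0\<le>t" "t\<le>r" for t
  proof -
    have l1: "((\<lambda>t. x + t*\<^sub>R u + r*\<^sub>R w) has_derivative (\<lambda>s. s*\<^sub>R u)) (at t within {0..r})"
      by (auto intro!: derivative_eq_intros)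
    have l2: "((\<lambda>t. x + t*\<^sub>R u) has_derivative (\<lambda>s. s*\<^sub>R u)) (at t within {0..r})"
      by (auto intro!: derivative_eq_intros)
    have c1: "((\<lambda>t. h (x + t*\<^sub>R u + r*\<^sub>R w)) has_derivative (\<lambda>s. g (x + t*\<^sub>R u + r*\<^sub>R w) \<bullet> (s*\<^sub>R u))) (at t within {0..r})"
      using has_derivative_compose[OF l1 hd[OF inU[OF that, of r]]] r by simp
    have c2: "((\<lambda>t. h (x + t*\<^sub>R u)) has_derivative (\<lambda>s. g (x + t*\<^sub>R u) \<bullet> (s*\<^sub>R u))) (at t within {0..r})"
      using has_derivative_compose[OF l2 hd[OF inU0[OF that]]] by simp
    show ?thesis unfolding \<psi>_def using has_derivative_diff[OF c1 c2] .
  qed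
  obtain \<xi> where \<xi>: "\<xi> \<in> {0<..<r}" and
    e1: "\<psi> r - \<psi> 0 = g (x + \<xi>*\<^sub>R u + r*\<^sub>R w) \<bullet> ((r-0)*\<^sub>R u) - g (x + \<xi>*\<^sub>R u) \<bullet> ((r-0)*\<^sub>R u)"
    using mvt_simple[OF r dpsi] by blast
  define \<phi> where "\<phi> \<tau> = g (x + \<xi>*\<^sub>R u + \<tau>*\<^sub>R w) \<bullet> u" for \<tau>
  have dchi: "(\<phi> has_derivative (\<lambda>s. H (x + \<xi>*\<^sub>R u + \<tau>*\<^sub>R w) (s*\<^sub>R w) \<bullet> u)) (at \<tau> within {0..r})"
    if "0\<le>\<tau>" "\<tau>\<le>r" for \<tau>
  proof -
    have l1: "((\<lambda>t. x + \<xi>*\<^sub>R u + t*\<^sub>R w) has_derivative (\<lambda>s. s*\<^sub>R w)) (at \<tau> within {0..r})"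
      by (auto intro!: derivative_eq_intros)
    have c1: "((\<lambda>t. g (x + \<xi>*\<^sub>R u + t*\<^sub>R w)) has_derivative (\<lambda>s. H (x + \<xi>*\<^sub>R u + \<tau>*\<^sub>R w) (s*\<^sub>R w))) (at \<tau> within {0..r})"
      using has_derivative_compose[OF l1 gd[OF inU]] \<xi> that by auto
    show ?thesis unfolding \<phi>_def using has_derivative_inner_left[OF c1] .
  qed
  obtain \<eta> where \<eta>: "\<eta> \<in> {0<..<r}" and
    e2: "\<phi> r - \<phi> 0 = H (x + \<xi>*\<^sub>R u + \<eta>*\<^sub>R w) ((r-0)*\<^sub>R w) \<bullet> u"
    using mvt_simple[OF r dchi] by blast
  define p where "p = x + \<xi>*\<^sub>R u + \<eta>*\<^sub>R w"
  have "\<psi> r - \<psi> 0 = r * (\<phi> r - \<phi> 0)"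
    using e1 unfolding \<phi>_def by (simp add: algebra_simps)
  also have "\<dots> = r^2 * (H p w \<bullet> u)"
    using e2 unfolding p_def by (simp add: blinfun.scaleR_right power2_eq_square)
  finally have "\<psi> r - \<psi> 0 = r^2 * (H p w \<bullet> u)" .
  moreover have "dist p x \<le> r*(norm u + norm w)"
    using nb[of \<xi> \<eta>] \<xi> \<eta> unfolding p_def by (simp add: dist_norm algebra_simps)
  ultimately show ?thesis unfolding \<psi>_def by (intro exI[of _ p]) (simp add: algebra_simps)
qed

lemma hess_sym:
  fixes h :: "'a::euclidean_space \<Rightarrow> real"
  assumes U: "open U" and hd: "\<And>z. z\<in>U \<Longrightarrow> (h has_derivative (\<lambda>y. g z \<bullet> y)) (at z)"
    and gd: "\<And>z. z\<in>U \<Longrightarrow> (g has_derivative blinfun_apply (H z)) (at z)"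
    and cH: "continuous_on U H" and x: "x \<in> U"
  shows "H x w \<bullet> u = H x u \<bullet> w"
proof (rule ccontr)
  assume ne: "H x w \<bullet> u \<noteq> H x u \<bullet> w"
  define d where "d = \<bar>H x w \<bullet> u - H x u \<bullet> w\<bar>"
  have d: "d > 0" using ne unfolding d_def by simp
  have c1: "isCont (\<lambda>p. H p w \<bullet> u) x"
    using continuous_on_blinfun_matrix[OF cH] U x continuous_on_eq_continuous_at by blast
  have c2: "isCont (\<lambda>p. H p u \<bullet> w) x"
    using continuous_on_blinfun_matrix[OF cH] U x continuous_on_eq_continuous_at by blast
  obtain \<delta>1 where \<delta>1: "\<delta>1 > 0" "\<And>p. dist p x < \<delta>1 \<Longrightarrow> dist (H p w \<bullet> u) (H x w \<bullet> u) < d/2"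
    using c1[unfolded continuous_at_eps_delta] d by (meson half_gt_zero)
  obtain \<delta>2 where \<delta>2: "\<delta>2 > 0" "\<And>p. dist p x < \<delta>2 \<Longrightarrow> dist (H p u \<bullet> w) (H x u \<bullet> w) < d/2"
    using c2[unfolded continuous_at_eps_delta] d by (meson half_gt_zero)
  obtain \<epsilon> where \<epsilon>: "\<epsilon> > 0" "ball x \<epsilon> \<subseteq> U" using U x openE by blast
  define R where "R = min (min \<delta>1 \<delta>2) \<epsilon>"
  have R: "R > 0" using \<delta>1 \<delta>2 \<epsilon> unfolding R_def by simp
  define r where "r = R / (norm u + norm w + 1)"
  have r: "r > 0" using R unfolding r_def by (simp add: add_nonneg_pos)
  have rR: "r * (norm u + norm w) < R"
  proof -
    have "r * (norm u + norm w) < r * (norm u + norm w + 1)" using r by simp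
    also have "\<dots> = R"
    proof -
      have "norm u + norm w + 1 > 0" by (simp add: add_nonneg_pos)
      thus ?thesis unfolding r_def by simp
    qed
    finally show ?thesis .
  qed
  have sub: "cball x (r*(norm u + norm w)) \<subseteq> U"
    using \<epsilon> rR unfolding R_def by (auto simp: subset_eq)
  have sub': "cball x (r*(norm w + norm u)) \<subseteq> U"
    using sub by (simp add: add.commute)
  obtain p1 where p1: "dist p1 x \<le> r*(norm u + norm w)"
     "h(x + r*\<^sub>R u + r*\<^sub>R w) - h(x + r*\<^sub>R u) - h(x + r*\<^sub>R w) + h x = r^2 * (H p1 w \<bullet> u)"
    using mixed_step[OF hd gd r sub] by blast
  obtain p2 where p2: "dist p2 x \<le> r*(norm w + norm u)"
     "h(x + r*\<^sub>R w + r*\<^sub>R u) - h(x + r*\<^sub>R w) - h(x + r*\<^sub>R u) + h x = r^2 * (H p2 u \<bullet> w)"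
    using mixed_step[OF hd gd r sub'] by blast
  have "r^2 * (H p1 w \<bullet> u) = r^2 * (H p2 u \<bullet> w)"
    using p1(2) p2(2) by (simp add: algebra_simps)
  hence eq: "H p1 w \<bullet> u = H p2 u \<bullet> w" using r by simp
  have "dist p1 x < \<delta>1" using p1(1) rR unfolding R_def by simp
  hence a: "\<bar>H p1 w \<bullet> u - H x w \<bullet> u\<bar> < d/2" using \<delta>1 by (simp add: dist_real_def)
  have "dist p2 x < \<delta>2" using p2(1) rR unfolding R_def by (simp add: add.commute)
  hence b: "\<bar>H p2 u \<bullet> w - H x u \<bullet> w\<bar> < d/2" using \<delta>2 by (simp add: dist_real_def)
  show False using a b eq unfolding d_def by (simp add: abs_if split: if_splits)
qed

lemma grad_eqI:
  assumes a: "(F has_derivative (\<lambda>y. c \<bullet> y)) (at x)"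
  shows "grad F x = c"
proof -
  have "\<exists>g. (F has_derivative (\<lambda>y. g \<bullet> y)) (at x)" using a by blast
  then have "(F has_derivative (\<lambda>y. grad F x \<bullet> y)) (at x)" unfolding grad_def by (rule someI_ex)
  then have "(\<lambda>y. grad F x \<bullet> y) = (\<lambda>y. c \<bullet> y)" using has_derivative_unique a by blast
  then have "grad F x \<bullet> (grad F x - c) = c \<bullet> (grad F x - c)" by metis
  then have "(grad F x - c) \<bullet> (grad F x - c) = 0" by (simp add: inner_diff_left)
  then show ?thesis by simp
qed

lemma alg_id:
  fixes A B HX W G :: "'a::real_vector"
  assumes "ea * e = 1" "\<mu> \<noteq> 0"
  shows "(ea*P) *\<^sub>R (\<mu> *\<^sub>R (A - B - e *\<^sub>R HX) - G) - ((\<mu>*P) *\<^sub>R (W - HX) + (\<mu>*P*(ea+b)) *\<^sub>R (A - B))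
    = (\<mu>*P) *\<^sub>R (b *\<^sub>R B - b *\<^sub>R A - (ea/\<mu>) *\<^sub>R G - W)"
proof -
  have 1: "(ea*P) *\<^sub>R (\<mu> *\<^sub>R (e *\<^sub>R HX)) = (\<mu>*P) *\<^sub>R HX"
    using assms by (simp add: algebra_simps)
  have 2: "(\<mu>*P) *\<^sub>R ((ea/\<mu>) *\<^sub>R G) = (ea*P) *\<^sub>R G"
    using assms by simp
  have L: "(ea*P) *\<^sub>R (\<mu> *\<^sub>R (A - B - e *\<^sub>R HX) - G) =
     (ea*P*\<mu>) *\<^sub>R A - (ea*P*\<mu>) *\<^sub>R B - (\<mu>*P) *\<^sub>R HX - (ea*P) *\<^sub>R G"
    using 1 by (simp add: scaleR_diff_right)
  have R: "(\<mu>*P) *\<^sub>R (b *\<^sub>R B - b *\<^sub>R A - (ea/\<mu>) *\<^sub>R G - W) =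
     (\<mu>*P*b) *\<^sub>R B - (\<mu>*P*b) *\<^sub>R A - (ea*P) *\<^sub>R G - (\<mu>*P) *\<^sub>R W"
    using 2 by (simp add: scaleR_diff_right)
  have 3: "(ea*P*\<mu>) *\<^sub>R A - (ea*P*\<mu>) *\<^sub>R B - (\<mu>*P) *\<^sub>R HX - (ea*P) *\<^sub>R G
     - ((\<mu>*P) *\<^sub>R (W - HX) + (\<mu>*P*(ea+b)) *\<^sub>R (A - B)) =
     (\<mu>*P*b) *\<^sub>R B - (\<mu>*P*b) *\<^sub>R A - (ea*P) *\<^sub>R G - (\<mu>*P) *\<^sub>R W"
    by (simp add: algebra_simps)
  show ?thesis unfolding L R using 3 .
qed

theorem proposition1:
  fixes U :: "'a::euclidean_space set"
    and h f :: "'a \<Rightarrow> real"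
    and \<mu> :: real
    and \<alpha> \<beta> \<gamma> :: "real \<Rightarrow> real"
    and X X' :: "real \<Rightarrow> 'a"
  assumes "open U" and "convex U"
    and "convex_on U h" and "C2_on U h"
    and "C1_on U f"
    and "\<mu> > 0"
    and "smooth_real \<alpha>" and "smooth_real \<beta>" and "smooth_real \<gamma>"
    and "\<forall>t. deriv \<gamma> t = exp (\<alpha> t)"
    and "\<forall>t. (X has_vector_derivative X' t) (at t)"
    and "\<forall>t. X' differentiable (at t)"
    and "\<forall>t. X t \<in> U \<and> X t + exp (- \<alpha> t) *\<^sub>R X' t \<in> U"
  shows "(\<forall>t. grad (\<lambda>x. bregman_lagrangian h f \<mu> \<alpha> \<beta> \<gamma> x (X' t) t) (X t)
              = vector_derivative (\<lambda>s. grad (\<lambda>v. bregman_lagrangian h f \<mu> \<alpha> \<beta> \<gamma> (X s) v s) (X' s)) (at t))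
     \<longleftrightarrow>
         (\<forall>t. vector_derivative (\<lambda>s. grad h (X s + exp (- \<alpha> s) *\<^sub>R X' s)) (at t)
              = deriv \<beta> t *\<^sub>R grad h (X t)
                - deriv \<beta> t *\<^sub>R grad h (X t + exp (- \<alpha> t) *\<^sub>R X' t)
                - (exp (\<alpha> t) / \<mu>) *\<^sub>R grad f (X t))"
proof -
  note U = assms(1)
  obtain gh Hh where gh: "\<And>x. x\<in>U \<Longrightarrow> (h has_derivative (\<lambda>y. gh x \<bullet> y)) (at x)"
    and Hh: "\<And>x. x\<in>U \<Longrightarrow> (gh has_derivative blinfun_apply (Hh x)) (at x)"
    and cH: "continuous_on U Hh"
    using assms(4) unfolding C2_on_def by blast
  obtain gf where gf: "\<And>x. x\<in>U \<Longrightarrow> (f has_derivative (\<lambda>y. gf x \<bullet> y)) (at x)"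
    using assms(5) unfolding C1_on_def by blast
  have grad_h: "grad h x = gh x" if "x \<in> U" for x using grad_eqI[OF gh[OF that]] .
  have grad_f: "grad f x = gf x" if "x \<in> U" for x using grad_eqI[OF gf[OF that]] .
  have sym: "Hh x w \<bullet> u = Hh x u \<bullet> w" if "x \<in> U" for x u w
    using hess_sym[OF U gh Hh cH that] .
  have dfun: "(F has_real_derivative deriv F t) (at t)" if "smooth_real F" for F t
  proof -
    have "F differentiable (at t)" using that unfolding smooth_real_def
      by (metis funpow_0)
    then show ?thesis using DERIV_deriv_iff_real_differentiable by blast
  qed
  have d\<alpha>: "\<And>t. (\<alpha> has_real_derivative deriv \<alpha> t) (at t)" using dfun assms(7) by blast
  have d\<beta>: "\<And>t. (\<beta> has_real_derivative deriv \<beta> t) (at t)" using dfun assms(8) by blast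
  have d\<gamma>: "\<And>t. (\<gamma> has_real_derivative exp (\<alpha> t)) (at t)" using dfun assms(9) assms(10) by metis
  have dX: "\<And>t. (X has_vector_derivative X' t) (at t)" using assms(11) by blast
  define X'' where "X'' t = vector_derivative X' (at t)" for t
  have dX': "\<And>t. (X' has_vector_derivative X'' t) (at t)"
    unfolding X''_def using assms(12) vector_derivative_works by blast
  define Y where "Y s = X s + exp (- \<alpha> s) *\<^sub>R X' s" for s
  have XU: "\<And>s. X s \<in> U" and YU: "\<And>s. Y s \<in> U" using assms(13) unfolding Y_def by auto
  have expid: "exp (\<alpha> s + \<gamma> s + \<beta> s) * exp (- \<alpha> s) = exp (\<gamma> s + \<beta> s)" for s
    by (simp add: mult_exp_exp)
  define c1 where "c1 t = exp (\<alpha> t + \<gamma> t + \<beta> t) *\<^sub>R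
      (\<mu> *\<^sub>R (gh (Y t) - gh (X t) - exp (- \<alpha> t) *\<^sub>R Hh (X t) (X' t)) - gf (X t))" for t
  have A: "grad (\<lambda>x. bregman_lagrangian h f \<mu> \<alpha> \<beta> \<gamma> x (X' t) t) (X t) = c1 t" for t
  proof -
    define e where "e = exp (- \<alpha> t)"
    define E where "E = exp (\<alpha> t + \<gamma> t + \<beta> t)"
    define v0 where "v0 = X' t"
    define x0 where "x0 = X t"
    have Y0: "Y t = x0 + e *\<^sub>R v0" unfolding Y_def e_def v0_def x0_def by simp
    have d1: "((\<lambda>x. h (x + e *\<^sub>R v0)) has_derivative (\<lambda>y. gh (Y t) \<bullet> y)) (at x0)"
    proof -
      have l: "((\<lambda>x. x + e *\<^sub>R v0) has_derivative (\<lambda>y. y)) (at x0)"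
        by (auto intro!: derivative_eq_intros)
      show ?thesis using has_derivative_compose[OF l gh[OF YU[of t], unfolded Y0]] Y0 by simp
    qed
    have d2: "(h has_derivative (\<lambda>y. gh x0 \<bullet> y)) (at x0)" using gh XU x0_def by blast
    have d3: "((\<lambda>x. gh x \<bullet> (e *\<^sub>R v0)) has_derivative (\<lambda>y. Hh x0 y \<bullet> (e *\<^sub>R v0))) (at x0)"
      using has_derivative_inner_left[OF Hh[OF XU[of t]], of "e *\<^sub>R v0"] x0_def by blast
    have d4: "(f has_derivative (\<lambda>y. gf x0 \<bullet> y)) (at x0)" using gf XU x0_def by blast
    have dL: "((\<lambda>x. E * (\<mu> * (h (x + e *\<^sub>R v0) - h x - gh x \<bullet> (e *\<^sub>R v0)) - f x)) has_derivative
       (\<lambda>y. E * (\<mu> * (gh (Y t) \<bullet> y - gh x0 \<bullet> y - Hh x0 y \<bullet> (e *\<^sub>R v0)) - gf x0 \<bullet> y))) (at x0)"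
      by (intro has_derivative_mult_right has_derivative_diff d1 d2 d3 d4)
    have eqf: "(\<lambda>y. E * (\<mu> * (gh (Y t) \<bullet> y - gh x0 \<bullet> y - Hh x0 y \<bullet> (e *\<^sub>R v0)) - gf x0 \<bullet> y))
       = (\<lambda>y. c1 t \<bullet> y)"
    proof
      fix y
      have "Hh x0 y \<bullet> (e *\<^sub>R v0) = e * (Hh x0 v0 \<bullet> y)" using sym[OF XU[of t]] x0_def by simp
      then show "E * (\<mu> * (gh (Y t) \<bullet> y - gh x0 \<bullet> y - Hh x0 y \<bullet> (e *\<^sub>R v0)) - gf x0 \<bullet> y) = c1 t \<bullet> y"
        unfolding c1_def E_def e_def x0_def v0_def
        by (simp add: inner_diff_left inner_scaleR_left algebra_simps)
    qed
    have dL': "((\<lambda>x. bregman_lagrangian h f \<mu> \<alpha> \<beta> \<gamma> x (X' t) t) has_derivative (\<lambda>y. c1 t \<bullet> y)) (at x0)"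
    proof (rule has_derivative_transform_within_open[OF dL[unfolded eqf] U])
      show "x0 \<in> U" using XU x0_def by simp
      fix x assume "x \<in> U"
      then show "E * (\<mu> * (h (x + e *\<^sub>R v0) - h x - gh x \<bullet> (e *\<^sub>R v0)) - f x) =
        bregman_lagrangian h f \<mu> \<alpha> \<beta> \<gamma> x (X' t) t"
        unfolding bregman_lagrangian_def bregman_def E_def e_def v0_def by (simp add: grad_h)
    qed
    show ?thesis using grad_eqI[OF dL'] x0_def by simp
  qed
  define c2 where "c2 s = (\<mu> * exp (\<gamma> s + \<beta> s)) *\<^sub>R (gh (Y s) - gh (X s))" for s
  have B: "grad (\<lambda>v. bregman_lagrangian h f \<mu> \<alpha> \<beta> \<gamma> (X s) v s) (X' s) = c2 s" for s
  proof -
    define e where "e = exp (- \<alpha> s)"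
    define E where "E = exp (\<alpha> s + \<gamma> s + \<beta> s)"
    have fe: "(\<lambda>v. bregman_lagrangian h f \<mu> \<alpha> \<beta> \<gamma> (X s) v s) =
      (\<lambda>v. E * (\<mu> * (h (X s + e *\<^sub>R v) - h (X s) - e * (gh (X s) \<bullet> v)) - f (X s)))"
      unfolding bregman_lagrangian_def bregman_def E_def e_def by (simp add: grad_h[OF XU])
    have d1: "((\<lambda>v. h (X s + e *\<^sub>R v)) has_derivative (\<lambda>y. gh (Y s) \<bullet> (e *\<^sub>R y))) (at (X' s))"
    proof -
      have l: "((\<lambda>v. X s + e *\<^sub>R v) has_derivative (\<lambda>y. e *\<^sub>R y)) (at (X' s))"
        by (auto intro!: derivative_eq_intros)
      have Ys: "Y s = X s + e *\<^sub>R X' s" unfolding Y_def e_def by simp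
      show ?thesis using has_derivative_compose[OF l gh[OF YU[of s], unfolded Ys]] Ys by simp
    qed
    have d2: "((\<lambda>v. e * (gh (X s) \<bullet> v)) has_derivative (\<lambda>y. e * (gh (X s) \<bullet> y))) (at (X' s))"
      by (auto intro!: derivative_eq_intros)
    have dL: "((\<lambda>v. E * (\<mu> * (h (X s + e *\<^sub>R v) - h (X s) - e * (gh (X s) \<bullet> v)) - f (X s))) has_derivative
       (\<lambda>y. E * (\<mu> * (gh (Y s) \<bullet> (e *\<^sub>R y) - 0 - e * (gh (X s) \<bullet> y)) - 0))) (at (X' s))"
      by (intro has_derivative_mult_right has_derivative_diff d1 d2 has_derivative_const)
    have eqf: "(\<lambda>y. E * (\<mu> * (gh (Y s) \<bullet> (e *\<^sub>R y) - 0 - e * (gh (X s) \<bullet> y)) - 0)) = (\<lambda>y. c2 s \<bullet> y)"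
    proof
      fix y
      have "E * e = exp (\<gamma> s + \<beta> s)" unfolding E_def e_def by (rule expid)
      moreover have "E * (\<mu> * (gh (Y s) \<bullet> (e *\<^sub>R y) - 0 - e * (gh (X s) \<bullet> y)) - 0)
         = (E * e) * \<mu> * (gh (Y s) \<bullet> y - gh (X s) \<bullet> y)" by (simp add: algebra_simps)
      ultimately show "E * (\<mu> * (gh (Y s) \<bullet> (e *\<^sub>R y) - 0 - e * (gh (X s) \<bullet> y)) - 0) = c2 s \<bullet> y"
        unfolding c2_def by (simp add: inner_diff_left algebra_simps)
    qed
    show ?thesis unfolding fe using grad_eqI[OF dL[unfolded eqf]] .
  qed
  define Y' where "Y' t = X' t + (exp (- \<alpha> t) * (- deriv \<alpha> t)) *\<^sub>R X' t + exp (- \<alpha> t) *\<^sub>R X'' t" for t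
  have dY: "(Y has_vector_derivative Y' t) (at t)" for t
  proof -
    have de: "((\<lambda>s. exp (- \<alpha> s)) has_real_derivative exp (- \<alpha> t) * (- deriv \<alpha> t)) (at t)"
      by (auto intro!: derivative_eq_intros d\<alpha>)
    have "((\<lambda>s. exp (- \<alpha> s) *\<^sub>R X' s) has_vector_derivative
        exp (- \<alpha> t) *\<^sub>R X'' t + (exp (- \<alpha> t) * (- deriv \<alpha> t)) *\<^sub>R X' t) (at t)"
      using has_vector_derivative_scaleR[OF de dX'] .
    from has_vector_derivative_add[OF dX this] show ?thesis
      unfolding Y_def Y'_def by (simp add: algebra_simps)
  qed
  have dghY: "((\<lambda>s. gh (Y s)) has_vector_derivative Hh (Y t) (Y' t)) (at t)" for t
  proof -
    have "(gh has_derivative Hh (Y t)) (at (Y t) within Y ` UNIV)"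
      using Hh[OF YU] has_derivative_at_withinI by blast
    from vector_derivative_diff_chain_within[OF dY[of t] this]
    show ?thesis by (simp add: o_def)
  qed
  have dghX: "((\<lambda>s. gh (X s)) has_vector_derivative Hh (X t) (X' t)) (at t)" for t
  proof -
    have "(gh has_derivative Hh (X t)) (at (X t) within X ` UNIV)"
      using Hh[OF XU] has_derivative_at_withinI by blast
    from vector_derivative_diff_chain_within[OF dX[of t] this]
    show ?thesis by (simp add: o_def)
  qed
  define P where "P t = exp (\<gamma> t + \<beta> t)" for t
  define D where "D t = (\<mu> * P t) *\<^sub>R (Hh (Y t) (Y' t) - Hh (X t) (X' t))
      + (\<mu> * P t * (exp (\<alpha> t) + deriv \<beta> t)) *\<^sub>R (gh (Y t) - gh (X t))" for t
  have dc2: "(c2 has_vector_derivative D t) (at t)" for t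
  proof -
    have ds: "((\<lambda>s. \<mu> * exp (\<gamma> s + \<beta> s)) has_real_derivative \<mu> * P t * (exp (\<alpha> t) + deriv \<beta> t)) (at t)"
      unfolding P_def by (auto intro!: derivative_eq_intros d\<gamma> d\<beta> simp: algebra_simps)
    from has_vector_derivative_scaleR[OF ds has_vector_derivative_diff[OF dghY dghX]]
    show ?thesis unfolding c2_def[abs_def] D_def P_def by simp
  qed
  have Bf: "(\<lambda>s. grad (\<lambda>v. bregman_lagrangian h f \<mu> \<alpha> \<beta> \<gamma> (X s) v s) (X' s)) = c2"
    using B by auto
  have Cf: "(\<lambda>s. grad h (X s + exp (- \<alpha> s) *\<^sub>R X' s)) = (\<lambda>s. gh (Y s))"
    using grad_h YU unfolding Y_def by auto
  have mP: "\<mu> * P t \<noteq> 0" for t using assms(6) unfolding P_def by simp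
  have key: "c1 t = D t \<longleftrightarrow> Hh (Y t) (Y' t) = deriv \<beta> t *\<^sub>R gh (X t) - deriv \<beta> t *\<^sub>R gh (Y t)
      - (exp (\<alpha> t) / \<mu>) *\<^sub>R gf (X t)" for t
  proof -
    have ea: "exp (\<alpha> t) * exp (- \<alpha> t) = 1" by (simp add: exp_minus)
    have E: "exp (\<alpha> t + \<gamma> t + \<beta> t) = exp (\<alpha> t) * P t"
      unfolding P_def by (simp add: mult_exp_exp add.assoc)
    have "c1 t - D t = (\<mu> * P t) *\<^sub>R (deriv \<beta> t *\<^sub>R gh (X t) - deriv \<beta> t *\<^sub>R gh (Y t)
      - (exp (\<alpha> t) / \<mu>) *\<^sub>R gf (X t) - Hh (Y t) (Y' t))"
      unfolding c1_def D_def E using alg_id[OF ea, of \<mu>] assms(6) by simp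
    then show ?thesis using mP[of t] by (metis eq_iff_diff_eq_0 scaleR_eq_0_iff)
  qed
  show ?thesis
    unfolding Bf Cf A vector_derivative_at[OF dc2] vector_derivative_at[OF dghY]
    using key grad_h[OF XU] grad_h[OF YU] grad_f[OF XU] unfolding Y_def by simp
qed

end
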